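(* For every $n\ge 3$, $\rho_T(C_n)\le 3$, where $C_n$ is the cycle on $n$ vertices.
   Context: Graphs are finite and simple. For $u,v\in(\mathbb{R}\cup\{\infty\})^k$ the min-plus tropical dot product is $u\odot v=\min_i(u_i+v_i)$. A min-plus $k$-tropical dot product representation of $G=(V,E)$ is a map $f:V\to(\mathbb{R}\cup\{\infty\})^k$ with a threshold $t>0$ such that for all distinct $x,y\in V$: $xy\in E$ iff $f(x)\odot f(y)\ge t$. $\rho_T(G)$ is the least $k\ge 1$ for which such a representation exists. *)

theory Defs
  imports "HOL-Library.Extended_Real"
begin

text \<open>Vectors in (R \<union> {infinity})^k are modelled as functions nat => ereal whose
  coordinates i < k are never minus infinity (coordinates >= k are irrelevant).\<close>

definition trop_vec :: "nat \<Rightarrow> (nat \<Rightarrow> ereal) \<Rightarrow> bool" where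
  "trop_vec k u \<longleftrightarrow> (\<forall>i<k. u i \<noteq> -\<infinity>)"

definition trop_dot :: "nat \<Rightarrow> (nat \<Rightarrow> ereal) \<Rightarrow> (nat \<Rightarrow> ereal) \<Rightarrow> ereal" where
  "trop_dot k u v = Min ((\<lambda>i. u i + v i) ` {..<k})"

definition trop_rep :: "'a set \<Rightarrow> ('a \<Rightarrow> 'a \<Rightarrow> bool) \<Rightarrow> nat \<Rightarrow> bool" where
  "trop_rep V E k \<longleftrightarrow> (\<exists>(f :: 'a \<Rightarrow> nat \<Rightarrow> ereal) (t :: real). t > 0 \<and>
     (\<forall>x\<in>V. trop_vec k (f x)) \<and>
     (\<forall>x\<in>V. \<forall>y\<in>V. x \<noteq> y \<longrightarrow> (E x y \<longleftrightarrow> trop_dot k (f x) (f y) \<ge> ereal t)))"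

definition rho_T :: "'a set \<Rightarrow> ('a \<Rightarrow> 'a \<Rightarrow> bool) \<Rightarrow> nat" where
  "rho_T V E = (LEAST k. 1 \<le> k \<and> trop_rep V E k)"

definition cycle_edge :: "nat \<Rightarrow> nat \<Rightarrow> nat \<Rightarrow> bool" where
  "cycle_edge n i j \<longleftrightarrow> i < n \<and> j < n \<and> (j = (i + 1) mod n \<or> i = (j + 1) mod n)"

end

theory Submission
  imports Defs
begin

definition pa :: "nat \<Rightarrow> real" where
  "pa i = (if even i then 1 + real i else 1 - real i)"
definition pb :: "nat \<Rightarrow> real" where
  "pb i = (if even i then 1 - real i else 1 + real i)"
definition pc :: "nat \<Rightarrow> nat \<Rightarrow> real" where
  "pc n i = (if i = 1 \<or> i = n - 1 then 1 else 1/2)"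

definition fv :: "nat \<Rightarrow> nat \<Rightarrow> nat \<Rightarrow> ereal" where
  "fv n i k = (if i = 0 then (if k = 2 then 0 else \<infinity>)
      else ereal (if k = 0 then pa i else if k = 1 then pb i else pc n i))"

lemma dot3: "trop_dot 3 u v = min (u 0 + v 0) (min (u 1 + v 1) (u 2 + v 2))"
proof -
  have "{..<(3::nat)} = {0,1,2}" by auto
  then show ?thesis unfolding trop_dot_def by (simp add: min.assoc)
qed

lemma path2:
  assumes "i \<ge> 1" "j \<ge> 1" "i \<noteq> j"
  shows "(min (pa i + pa j) (pb i + pb j) \<ge> 1) \<longleftrightarrow> (j = i + 1 \<or> i = j + 1)"
proof (cases "even i")
  case True
  show ?thesis
  proof (cases "even j")
    case True
    have "i + j \<ge> 3" using assms by auto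
    then have "real i + real j \<ge> 3" by linarith
    moreover have "j \<noteq> i + 1 \<and> i \<noteq> j + 1" using \<open>even i\<close> True by auto
    ultimately show ?thesis using \<open>even i\<close> True by (simp add: pa_def pb_def)
  next
    case False
    then show ?thesis using \<open>even i\<close> assms by (auto simp add: pa_def pb_def min_def)
  qed
next
  case False
  show ?thesis
  proof (cases "even j")
    case True
    then show ?thesis using \<open>odd i\<close> assms by (auto simp add: pa_def pb_def min_def)
  next
    case False
    have "i + j \<ge> 3" using assms by auto
    then have "real i + real j \<ge> 3" by linarith
    moreover have "j \<noteq> i + 1 \<and> i \<noteq> j + 1" using \<open>odd i\<close> False by auto
    ultimately show ?thesis using \<open>odd i\<close> False by (simp add: pa_def pb_def)
  qed
qed

theorem mainTheorem18:
  fixes n :: nat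
  assumes "n \<ge> 3"
  shows "(\<exists>k. 1 \<le> k \<and> trop_rep {0..<n} (cycle_edge n) k) \<and> rho_T {0..<n} (cycle_edge n) \<le> 3"
proof -
  have key: "cycle_edge n x y \<longleftrightarrow> trop_dot 3 (fv n x) (fv n y) \<ge> ereal 1"
    if "x < n" "y < n" "x \<noteq> y" for x y
  proof -
    have cyc: "cycle_edge n x y \<longleftrightarrow> (y = (x + 1) mod n \<or> x = (y + 1) mod n)"
      using that by (simp add: cycle_edge_def)
    have m: "(z + 1) mod n = (if z = n - 1 then 0 else z + 1)" if "z < n" for z
      using that assms by (auto simp: mod_if)
    consider "x = 0" | "y = 0" | "x \<noteq> 0" "y \<noteq> 0" by blast
    then show ?thesis
    proof cases
      case 1
      then have "y \<noteq> 0" using that by auto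
      have d: "trop_dot 3 (fv n x) (fv n y) = ereal (pc n y)"
        using 1 \<open>y \<noteq> 0\<close> by (simp add: dot3 fv_def)
      show ?thesis unfolding d cyc using 1 \<open>y \<noteq> 0\<close> m[OF \<open>y < n\<close>] assms
        by (auto simp: pc_def)
    next
      case 2
      then have "x \<noteq> 0" using that by auto
      have d: "trop_dot 3 (fv n x) (fv n y) = ereal (pc n x)"
        using 2 \<open>x \<noteq> 0\<close> by (simp add: dot3 fv_def)
      show ?thesis unfolding d cyc using 2 \<open>x \<noteq> 0\<close> m[OF \<open>x < n\<close>] assms
        by (auto simp: pc_def)
    next
      case 3
      have d: "trop_dot 3 (fv n x) (fv n y) = ereal (min (min (pa x + pa y) (pb x + pb y)) (pc n x + pc n y))"
        using 3 by (simp add: dot3 fv_def min.assoc)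
      have pc1: "pc n x + pc n y \<ge> 1" by (simp add: pc_def)
      have "cycle_edge n x y \<longleftrightarrow> (y = x + 1 \<or> x = y + 1)"
        unfolding cyc using m[OF \<open>x < n\<close>] m[OF \<open>y < n\<close>] 3 that by auto
      then show ?thesis unfolding d using path2[of x y] 3 that pc1 by auto
    qed
  qed
  have rep: "trop_rep {0..<n} (cycle_edge n) 3"
    unfolding trop_rep_def
    apply (rule exI[of _ "fv n"], rule exI[of _ 1])
    using key by (auto simp: trop_vec_def fv_def)
  have "rho_T {0..<n} (cycle_edge n) \<le> 3"
    unfolding rho_T_def by (rule Least_le) (use rep in simp)
  moreover have "\<exists>k. 1 \<le> k \<and> trop_rep {0..<n} (cycle_edge n) k"
    using rep by (intro exI[of _ 3]) simp
  ultimately show ?thesis by blast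
qed

end
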